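(* Let $q\in(0,1]$, $\eta\in(0,1]$, $R_0^*>0$, $m_1>0$. Assume [A12]: (i) for every $T\in\mathbb T$, $\mathbb H_T$ is almost surely thrice differentiable in $\theta$ on $B^*=\{\theta\in\Theta:|\theta-\theta^*|<R_0^*\}$; (ii) $\sup_{T}E[\|a_T\|^{m_1}|\partial_\theta\mathbb H_T(\theta^* )|^{m_1}]<\infty$; (iii) $\sup_{T}E[\|a_T\|^{2m_1}\sup_{\theta\in B^*}|\partial_\theta^2\mathbb H_T(\theta)|^{m_1}]<\infty$; (iv) $\sup_{T}E[\|a_T\|^{2m_1}\sup_{\theta\in B^*}|\partial_\theta^3\mathbb H_T(\theta)|^{m_1}]<\infty$ (suprema over $T\in\mathbb T$). Then for every $m_2>0$ there exist constants $R_0>0$ and $K>0$ such that $$c_T\Bigl(\frac{m_1m_2}{qm_1+m_2},R_0\Bigr)\le K\|a_T\|^{-\frac{\eta(2-q)m_1m_2}{qm_1+m_2}}\bigl(E[\|G_T^{(00)}\|^{m_2}]\bigr)^{\frac{qm_1}{qm_1+m_2}}$$ for every $T\in\mathbb T$ with $\|a_T\|\le1$.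
   Context: Let $\Theta\subset\mathbb R^{\mathsf p}$ be a bounded open set with closure $\overline\Theta$ and $\theta^*\in\Theta$. Let $(\Omega,\mathcal F,P)$ be a probability space, $\mathbb T\subset\mathbb R_{\ge0}$ with $\sup\mathbb T=\infty$. For each $T\in\mathbb T$, $\mathbb H_T:\Omega\times\overline\Theta\to\mathbb R$ is a random field continuous in $\theta$ for every $\omega$; $\partial_\theta^k\mathbb H_T$ denotes its $k$-th derivative tensor. Penalty weights $\xi_T^j>0$ ($j=1,\dots,\mathsf p$) are (possibly random). $\mathcal J^{(0)}=\{j:\theta^*_j=0\}$, $\mathcal J^{(1)}=\{j:\theta^*_j\ne0\}$; $A^{(00)}=(A_{ij})_{i,j\in\mathcal J^{(0)}}$. $a_T=\mathrm{diag}(\alpha_T^1,\dots,\alpha_T^{\mathsf p})$ is deterministic, invertible, with $\|a_T\|\to0$ ($\|\cdot\|$ spectral norm); $\mathbb U_T=\{u:\theta^*+a_Tu\in\overline\Theta\}$. $\tilde a_T$ is diagonal with $(\tilde a_T)_{jj}=(\xi_T^j)^{-1/q}$ for $j\in\mathcal J^{(0)}$ and $\alpha_T^j$ for $j\in\mathcal J^{(1)}$; $G_T=a_T^{-1}\tilde a_T$. For $R>0$, $\mathsf c_{T,R}=\sup\frac{|\mathbb H_T(\theta^*+a_Tu)-\mathbb H_T(\theta^*+a_Tv)|}{|u-v|^q}$ over $u,v\in\mathbb U_T$, $u\ne v$, $|a_Tu|,|a_Tv|<R\|a_T\|^{1-\eta}$; for $m>0$, $c_T(m,R)=E[|\mathsf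 c_{T,R}|^{m}\|G_T^{(00)}\|^{qm}]$ (possibly $\infty$). *)

theory Defs
  imports "HOL-Probability.Probability"
begin

definition diagm :: "('p::finite \<Rightarrow> real) \<Rightarrow> real^'p^'p" where
  "diagm d = (\<chi> i j. if i = j then d i else 0)"

definition specnorm :: "real^'p::finite^'p \<Rightarrow> real" where
  "specnorm M = onorm (\<lambda>x. M *v x)"

text \<open>Principal submatrix indexed by J, embedded by zero padding
  (has the same spectral norm as the submatrix itself).\<close>
definition subblock :: "'p::finite set \<Rightarrow> real^'p^'p \<Rightarrow> real^'p^'p" where
  "subblock J M = (\<chi> i j. if i \<in> J \<and> j \<in> J then M $ i $ j else 0)"

text \<open>Real power of an extended nonnegative real (used for positive exponents).\<close>
definition ennpow :: "ennreal \<Rightarrow> real \<Rightarrow> ennreal" where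
  "ennpow x r = (if x = \<top> then \<top> else ennreal (enn2real x powr r))"

definition pd :: "'p::finite \<Rightarrow> (real^'p \<Rightarrow> real) \<Rightarrow> real^'p \<Rightarrow> real" where
  "pd i f \<theta> = deriv (\<lambda>t. f (\<theta> + t *\<^sub>R axis i 1)) 0"

definition thrice_diff_on :: "(real^'p::finite \<Rightarrow> real) \<Rightarrow> (real^'p) set \<Rightarrow> bool" where
  "thrice_diff_on f S \<longleftrightarrow>
     (\<forall>\<theta>\<in>S. f differentiable (at \<theta>)) \<and>
     (\<forall>i. \<forall>\<theta>\<in>S. pd i f differentiable (at \<theta>)) \<and>
     (\<forall>i j. \<forall>\<theta>\<in>S. pd j (pd i f) differentiable (at \<theta>))"

definition dnorm1 :: "(real^'p::finite \<Rightarrow> real) \<Rightarrow> real^'p \<Rightarrow> real" where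
  "dnorm1 f \<theta> = sqrt (\<Sum>i\<in>UNIV. (pd i f \<theta>)\<^sup>2)"

definition dnorm2 :: "(real^'p::finite \<Rightarrow> real) \<Rightarrow> real^'p \<Rightarrow> real" where
  "dnorm2 f \<theta> = sqrt (\<Sum>i\<in>UNIV. \<Sum>j\<in>UNIV. (pd j (pd i f) \<theta>)\<^sup>2)"

definition dnorm3 :: "(real^'p::finite \<Rightarrow> real) \<Rightarrow> real^'p \<Rightarrow> real" where
  "dnorm3 f \<theta> = sqrt (\<Sum>i\<in>UNIV. \<Sum>j\<in>UNIV. \<Sum>k\<in>UNIV. (pd k (pd j (pd i f)) \<theta>)\<^sup>2)"

text \<open>Hoelder-type constant c_{T,R}(omega) (value in [0,\<infinity>]).
  Arguments: field h (= H_T(omega,.)), Theta, theta*, diagonal of a_T, q, eta, R.\<close>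
definition holder_const ::
  "(real^'p::finite \<Rightarrow> real) \<Rightarrow> (real^'p) set \<Rightarrow> real^'p \<Rightarrow> ('p \<Rightarrow> real)
     \<Rightarrow> real \<Rightarrow> real \<Rightarrow> real \<Rightarrow> ennreal" where
  "holder_const h Th ths al q eta R =
     (let A = diagm al; nA = specnorm A;
          U = {u. ths + A *v u \<in> closure Th} in
      SUP (u, v) \<in> {(u, v). u \<in> U \<and> v \<in> U \<and> u \<noteq> v \<and>
                      norm (A *v u) < R * nA powr (1 - eta) \<and>
                      norm (A *v v) < R * nA powr (1 - eta)}.
        ennreal (\<bar>h (ths + A *v u) - h (ths + A *v v)\<bar> / norm (u - v) powr q))"

text \<open>G_T^{(00)}(omega): the (J0,J0) block of a_T^{-1} tilde a_T.\<close>
definition G00 :: "real^'p::finite \<Rightarrow> ('p \<Rightarrow> real) \<Rightarrow> ('p \<Rightarrow> real) \<Rightarrow> real \<Rightarrow> real^'p^'p" where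
  "G00 ths al xi q =
     (let J0 = {j. ths $ j = 0};
          At = diagm (\<lambda>j. if j \<in> J0 then xi j powr (- 1 / q) else al j)
      in subblock J0 (matrix_inv (diagm al) ** At))"

end

theory Submission
  imports Defs
begin


lemma diagm_mult: "diagm a ** diagm b = diagm (\<lambda>j. a j * b j)"
  unfolding diagm_def matrix_matrix_mult_def vec_eq_iff
  by (auto simp: if_distrib[of "\<lambda>x. x * _"] if_distrib[of "\<lambda>x. _ * x"] sum.delta cong: if_cong)

lemma matrix_inv_diagm:
  assumes "\<forall>j. d j \<noteq> 0"
  shows "matrix_inv (diagm d) = diagm (\<lambda>j. inverse (d j))"
proof -
  let ?B = "diagm (\<lambda>j. inverse (d j))"
  have one: "diagm (\<lambda>j. 1) = mat 1" by (simp add: diagm_def mat_def)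
  have AB: "diagm d ** ?B = mat 1" "?B ** diagm d = mat 1"
    using assms by (simp_all add: diagm_mult one[symmetric])
  show ?thesis unfolding matrix_inv_def
  proof (rule someI2[where a="?B"])
    fix A' assume "diagm d ** A' = mat 1 \<and> A' ** diagm d = mat 1"
    then have "A' = A' ** (diagm d ** ?B)" "A' ** diagm d = mat 1" using AB by auto
    then show "A' = ?B" by (metis matrix_mul_assoc matrix_mul_lid)
  qed (use AB in auto)
qed

lemma diagm_mulv: "(diagm d *v x) $ i = d i * x $ i"
  unfolding diagm_def matrix_vector_mult_def
  by (auto simp: if_distrib[of "\<lambda>x. x * _"] sum.delta cong: if_cong)

lemma norm_sq_vec: "(norm (x::real^'p))\<^sup>2 = (\<Sum>i\<in>UNIV. (x $ i)\<^sup>2)"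
  by (simp add: norm_vec_def L2_set_def sum_nonneg)

lemma specnorm_diagm: "specnorm (diagm d) = Max (range (\<lambda>j. \<bar>d j\<bar>))"
proof (rule antisym)
  let ?M = "Max (range (\<lambda>j. \<bar>d j\<bar>))"
  have M: "\<bar>d j\<bar> \<le> ?M" for j by simp
  have M0: "0 \<le> ?M" using M[of undefined] by linarith
  show "specnorm (diagm d) \<le> ?M" unfolding specnorm_def
  proof (rule onorm_le)
    fix x :: "real^'a"
    have "(norm (diagm d *v x))\<^sup>2 = (\<Sum>i\<in>UNIV. (d i * x $ i)\<^sup>2)"
      by (simp add: norm_sq_vec diagm_mulv)
    also have "\<dots> \<le> (\<Sum>i\<in>UNIV. ?M\<^sup>2 * (x $ i)\<^sup>2)"
    proof (rule sum_mono)
      fix i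
      have "(d i)\<^sup>2 \<le> ?M\<^sup>2" using M[of i] M0 by (simp add: abs_le_square_iff[symmetric])
      then show "(d i * x $ i)\<^sup>2 \<le> ?M\<^sup>2 * (x $ i)\<^sup>2"
        by (simp add: power_mult_distrib mult_right_mono)
    qed
    also have "\<dots> = (?M * norm x)\<^sup>2" by (simp add: norm_sq_vec power_mult_distrib sum_distrib_left)
    finally show "norm (diagm d *v x) \<le> ?M * norm x"
      by (rule power2_le_imp_le) (use M0 in simp)
  qed
  have "?M \<in> range (\<lambda>j. \<bar>d j\<bar>)" by (rule Max_in) auto
  then obtain j where j: "?M = \<bar>d j\<bar>" by blast
  have "norm (diagm d *v axis j 1) = \<bar>d j\<bar>"
  proof -
    have "diagm d *v axis j 1 = axis j (d j)"
      by (simp add: vec_eq_iff diagm_mulv axis_def)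
    moreover have "axis j (d j) = d j *\<^sub>R axis j (1::real)" by (simp add: axis_def vec_eq_iff)
    ultimately show ?thesis by simp
  qed
  then show "?M \<le> specnorm (diagm d)" unfolding specnorm_def
    using onorm[OF matrix_vector_mul_bounded_linear, of "diagm d" "axis j 1"] j by simp
qed

lemma specnorm_bound: "norm (M *v x) \<le> specnorm M * norm x"
  unfolding specnorm_def using onorm[OF matrix_vector_mul_bounded_linear] by blast

lemma subblock_diagm: "subblock J (diagm d) = diagm (\<lambda>j. if j \<in> J then d j else 0)"
  by (auto simp: subblock_def diagm_def vec_eq_iff)

lemma G00_diag:
  assumes "\<forall>j. al j \<noteq> 0"
  shows "G00 ths al xi q = diagm (\<lambda>j. if ths $ j = 0 then xi j powr (- 1 / q) / al j else 0)"
  unfolding G00_def Let_def using assms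
  by (simp add: matrix_inv_diagm diagm_mult subblock_diagm divide_inverse mult.commute cong: if_cong)


lemma pd_eq:
  fixes f :: "real^'p::finite \<Rightarrow> real"
  assumes D: "(f has_derivative D) (at x)"
  shows "pd i f x = D (axis i 1)"
proof -
  have lin: "linear D" using D has_derivative_linear by blast
  have l: "((\<lambda>t. x + t *\<^sub>R axis i 1) has_derivative (\<lambda>t. t *\<^sub>R axis i 1)) (at 0)"
    by (auto intro!: derivative_eq_intros)
  have D0: "(f has_derivative D) (at ((\<lambda>t. x + t *\<^sub>R axis i 1) 0))" using D by simp
  have "((f \<circ> (\<lambda>t. x + t *\<^sub>R axis i 1)) has_derivative (D \<circ> (\<lambda>t. t *\<^sub>R axis i 1))) (at 0)"
    by (rule diff_chain_at[OF l D0])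
  moreover have "(D \<circ> (\<lambda>t. t *\<^sub>R axis i 1)) = (*) (D (axis i 1))"
    using lin by (auto simp: fun_eq_iff linear_scale)
  ultimately have "((\<lambda>t. f (x + t *\<^sub>R axis i 1)) has_field_derivative D (axis i 1)) (at 0)"
    by (simp add: has_field_derivative_def comp_def)
  then show ?thesis unfolding pd_def by (rule DERIV_imp_deriv)
qed

lemma grad_deriv:
  fixes f :: "real^'p::finite \<Rightarrow> real"
  assumes "f differentiable (at x)"
  shows "(f has_derivative (\<lambda>h. \<Sum>i\<in>UNIV. h $ i * pd i f x)) (at x)"
proof -
  obtain D where D: "(f has_derivative D) (at x)" using assms differentiable_def by blast
  have lin: "linear D" using D has_derivative_linear by blast
  have "D h = (\<Sum>i\<in>UNIV. h $ i * pd i f x)" for h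
  proof -
    have "D h = D (\<Sum>i\<in>UNIV. h $ i *\<^sub>R axis i 1)"
      using basis_expansion[of h] by (simp add: scalar_mult_eq_scaleR)
    also have "\<dots> = (\<Sum>i\<in>UNIV. h $ i * D (axis i 1))"
      using lin by (simp add: linear_sum linear_scale)
    finally show ?thesis using pd_eq[OF D] by simp
  qed
  then have "D = (\<lambda>h. \<Sum>i\<in>UNIV. h $ i * pd i f x)" by auto
  then show ?thesis using D by simp
qed

lemma dnorm1_norm: "dnorm1 f x = norm (\<chi> i. pd i f x)"
  by (simp add: dnorm1_def norm_vec_def L2_set_def)

lemma onorm_grad:
  fixes f :: "real^'p::finite \<Rightarrow> real"
  shows "onorm (\<lambda>h. \<Sum>i\<in>UNIV. h $ i * pd i f x) \<le> dnorm1 f x"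
proof (rule onorm_le)
  fix h :: "real^'p"
  have "(\<Sum>i\<in>UNIV. h $ i * pd i f x) = h \<bullet> (\<chi> i. pd i f x)"
    by (simp add: inner_vec_def)
  then show "norm (\<Sum>i\<in>UNIV. h $ i * pd i f x) \<le> dnorm1 f x * norm h"
    using Cauchy_Schwarz_ineq2[of h "\<chi> i. pd i f x"] by (simp add: dnorm1_norm mult.commute)
qed

lemma lip:
  fixes f :: "real^'p::finite \<Rightarrow> real"
  assumes "convex S" "\<forall>z\<in>S. f differentiable (at z)" "\<forall>z\<in>S. dnorm1 f z \<le> B"
    "x \<in> S" "y \<in> S"
  shows "\<bar>f x - f y\<bar> \<le> B * norm (x - y)"
proof -
  have "norm (f x - f y) \<le> B * norm (x - y)"
  proof (rule differentiable_bound[OF assms(1) _ _ assms(4,5)])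
    fix z assume "z \<in> S"
    then show "(f has_derivative (\<lambda>h. \<Sum>i\<in>UNIV. h $ i * pd i f z)) (at z within S)"
      using assms(2) grad_deriv has_derivative_at_withinI by blast
    show "onorm (\<lambda>h. \<Sum>i\<in>UNIV. h $ i * pd i f z) \<le> B"
      using onorm_grad \<open>z \<in> S\<close> assms(3) order_trans by blast
  qed
  then show ?thesis by simp
qed


lemma dnorm1_pd_le: "dnorm1 (pd i f) z \<le> dnorm2 f z"
proof -
  have "(\<Sum>j\<in>UNIV. (pd j (pd i f) z)\<^sup>2) \<le> (\<Sum>i\<in>UNIV. \<Sum>j\<in>UNIV. (pd j (pd i f) z)\<^sup>2)"
    by (rule member_le_sum[where f="\<lambda>i. \<Sum>j\<in>UNIV. (pd j (pd i f) z)\<^sup>2"]) (auto intro: sum_nonneg)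
  then show ?thesis unfolding dnorm1_def dnorm2_def by (rule real_sqrt_le_mono)
qed

lemma grad_lip:
  fixes f :: "real^'p::finite \<Rightarrow> real"
  assumes S: "convex S" and d: "\<forall>z\<in>S. \<forall>i. pd i f differentiable (at z)"
    and B: "\<forall>z\<in>S. dnorm2 f z \<le> B" and xy: "x \<in> S" "y \<in> S"
  shows "norm ((\<chi> i. pd i f x) - (\<chi> i. pd i f y)) \<le> sqrt (real CARD('p)) * B * norm (x - y)"
proof -
  have "0 \<le> dnorm2 f x" by (simp add: dnorm2_def sum_nonneg)
  then have B0: "0 \<le> B" using B xy by (meson order_trans)
  have c: "\<bar>pd i f x - pd i f y\<bar> \<le> B * norm (x - y)" for i
    by (rule lip[OF S]) (use d B xy dnorm1_pd_le order_trans in blast)+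
  have "(norm ((\<chi> i. pd i f x) - (\<chi> i. pd i f y)))\<^sup>2 = (\<Sum>i\<in>UNIV. (pd i f x - pd i f y)\<^sup>2)"
    by (simp add: norm_vec_def L2_set_def sum_nonneg)
  also have "\<dots> \<le> (\<Sum>i\<in>(UNIV::'p set). (B * norm (x - y))\<^sup>2)"
  proof (rule sum_mono)
    fix i
    have "\<bar>pd i f x - pd i f y\<bar> \<le> \<bar>B * norm (x - y)\<bar>" using c[of i] B0 by simp
    then show "(pd i f x - pd i f y)\<^sup>2 \<le> (B * norm (x - y))\<^sup>2" by (simp add: abs_le_square_iff)
  qed
  also have "\<dots> = (sqrt (real CARD('p)) * B * norm (x - y))\<^sup>2"
    by (simp add: power_mult_distrib)
  finally show ?thesis
    by (rule power2_le_imp_le) (use B0 in simp)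
qed

lemma ball_lip:
  fixes f :: "real^'p::finite \<Rightarrow> real"
  assumes d1: "\<forall>z\<in>ball c r. f differentiable (at z)"
    and d2: "\<forall>z\<in>ball c r. \<forall>i. pd i f differentiable (at z)"
    and B: "\<forall>z\<in>ball c r. dnorm2 f z \<le> B" and B0: "0 \<le> B"
    and rho: "\<rho> \<le> r" and xy: "x \<in> ball c \<rho>" "y \<in> ball c \<rho>"
  shows "\<bar>f x - f y\<bar> \<le> (dnorm1 f c + sqrt (real CARD('p)) * B * \<rho>) * norm (x - y)"
proof (rule lip[OF convex_ball _ _ xy])
  have sub: "ball c \<rho> \<subseteq> ball c r" using rho by auto
  show "\<forall>z\<in>ball c \<rho>. f differentiable (at z)" using d1 sub by blast
  have "0 < \<rho>" using xy(1) zero_le_dist[of c x] unfolding mem_ball by linarith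
  then have c: "c \<in> ball c \<rho>" by simp
  show "\<forall>z\<in>ball c \<rho>. dnorm1 f z \<le> dnorm1 f c + sqrt (real CARD('p)) * B * \<rho>"
  proof
    fix z assume z: "z \<in> ball c \<rho>"
    have "norm ((\<chi> i. pd i f z) - (\<chi> i. pd i f c)) \<le> sqrt (real CARD('p)) * B * norm (z - c)"
      by (rule grad_lip[OF convex_ball _ _ z c]) (use d2 B sub in blast)+
    also have "\<dots> \<le> sqrt (real CARD('p)) * B * \<rho>"
      using z B0 by (intro mult_left_mono) (auto simp: dist_norm norm_minus_commute)
    finally have "norm ((\<chi> i. pd i f z) - (\<chi> i. pd i f c)) \<le> sqrt (real CARD('p)) * B * \<rho>" .
    moreover have "norm (\<chi> i. pd i f z) \<le> norm (\<chi> i. pd i f c) + norm ((\<chi> i. pd i f z) - (\<chi> i. pd i f c))"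
      by (rule norm_triangle_sub)
    ultimately show "dnorm1 f z \<le> dnorm1 f c + sqrt (real CARD('p)) * B * \<rho>"
      by (simp add: dnorm1_norm)
  qed
qed



lemma holder_bound:
  fixes h :: "real^'p::finite \<Rightarrow> real"
  assumes nA: "0 < specnorm (diagm al)" "specnorm (diagm al) \<le> 1"
    and q: "0 < q" "q \<le> 1" and R0: "0 < R0"
    and L: "0 \<le> L"
    and lipH: "\<forall>x\<in>ball ths (R0 * specnorm (diagm al) powr (1 - eta)).
                \<forall>y\<in>ball ths (R0 * specnorm (diagm al) powr (1 - eta)). \<bar>h x - h y\<bar> \<le> L * norm (x - y)"
  shows "holder_const h Th ths al q eta R0 \<le>
           ennreal (L * specnorm (diagm al) powr q * (2 * (R0 * specnorm (diagm al) powr (1 - eta))) powr (1 - q))"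
proof -
  define A where "A = diagm al"
  define nA where "nA = specnorm A"
  define \<rho> where "\<rho> = R0 * nA powr (1 - eta)"
  have nA0: "0 < nA" using nA by (simp add: nA_def A_def)
  have rho0: "0 < \<rho>" using nA0 R0 by (simp add: \<rho>_def)
  have lipH': "\<forall>x\<in>ball ths \<rho>. \<forall>y\<in>ball ths \<rho>. \<bar>h x - h y\<bar> \<le> L * norm (x - y)"
    using lipH by (simp add: \<rho>_def nA_def A_def)
  show ?thesis
    unfolding holder_const_def Let_def A_def[symmetric] nA_def[symmetric] \<rho>_def[symmetric]
  proof (rule SUP_least, clarify)
    fix u v assume uv: "u \<noteq> v" "norm (A *v u) < \<rho>" "norm (A *v v) < \<rho>"
    define t where "t = norm (A *v u - A *v v)"
    define n where "n = norm (u - v)"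
    have n0: "0 < n" using uv by (simp add: n_def)
    have x: "ths + A *v u \<in> ball ths \<rho>" and y: "ths + A *v v \<in> ball ths \<rho>"
      using uv by (auto simp: \<rho>_def dist_norm)
    have "\<bar>h (ths + A *v u) - h (ths + A *v v)\<bar> \<le> L * norm ((ths + A *v u) - (ths + A *v v))"
      using lipH' x y by blast
    also have "\<dots> = L * t" by (simp add: t_def)
    finally have hb: "\<bar>h (ths + A *v u) - h (ths + A *v v)\<bar> \<le> L * t" .
    have t1: "t \<le> nA * n"
      using specnorm_bound[of A "u - v"] by (simp add: t_def n_def nA_def matrix_vector_mult_diff_distrib)
    have t2: "t \<le> 2 * \<rho>"
      using norm_triangle_ineq4[of "A *v u" "A *v v"] uv by (simp add: t_def \<rho>_def)
    have t0: "0 \<le> t" by (simp add: t_def)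
    have tb: "t \<le> (nA * n) powr q * (2 * \<rho>) powr (1 - q)"
    proof (cases "t = 0")
      case True then show ?thesis by simp
    next
      case False
      have "t powr q * t powr (1 - q) = t powr (q + (1 - q))" by (rule powr_add[symmetric])
      then have "t = t powr q * t powr (1 - q)" using t0 False by simp
      also have "\<dots> \<le> (nA * n) powr q * (2 * \<rho>) powr (1 - q)"
        using t0 t1 t2 q by (intro mult_mono powr_mono2) auto
      finally show ?thesis .
    qed
    have "L * t \<le> L * ((nA * n) powr q * (2 * \<rho>) powr (1 - q))"
      using tb L by (rule mult_left_mono)
    also have "\<dots> = (L * nA powr q * (2 * \<rho>) powr (1 - q)) * n powr q"
    proof -
      have "(nA * n) powr q = nA powr q * n powr q" using nA0 n0 by (simp add: powr_mult)
      then show ?thesis by (simp add: mult_ac)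
    qed
    finally have "\<bar>h (ths + A *v u) - h (ths + A *v v)\<bar> / n powr q \<le> L * nA powr q * (2 * \<rho>) powr (1 - q)"
      using hb n0 by (simp add: pos_divide_le_eq)
    then show "ennreal (\<bar>h (ths + A *v u) - h (ths + A *v v)\<bar> / norm (u - v) powr q)
                \<le> ennreal (L * nA powr q * (2 * \<rho>) powr (1 - q))"
      unfolding n_def[symmetric] by (rule ennreal_leI)
  qed
qed


lemma sum_powr_le:
  fixes u v p :: real
  assumes "0 \<le> u" "0 \<le> v" "0 < p"
  shows "(u + v) powr p \<le> 2 powr p * (u powr p + v powr p)"
proof -
  have "(u + v) powr p \<le> (2 * max u v) powr p"
    using assms by (intro powr_mono2) auto
  also have "\<dots> = 2 powr p * (max u v) powr p" using assms by (simp add: powr_mult)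
  also have "(max u v) powr p \<le> u powr p + v powr p"
    by (cases "u \<le> v") (auto simp: max_def)
  then have "2 powr p * (max u v) powr p \<le> 2 powr p * (u powr p + v powr p)"
    by (intro mult_left_mono) auto
  finally show ?thesis .
qed

lemma real_ineq:
  fixes nA R0 q eta m1 d1 d2 cp :: real
  assumes nA: "0 < nA" "nA \<le> 1" and R0: "0 < R0" and q: "0 < q" "q \<le> 1"
    and eta: "0 < eta" "eta \<le> 1" and m1: "0 < m1" and d: "0 \<le> d1" "0 \<le> d2" and cp: "0 \<le> cp"
  shows "((d1 + cp * d2 * (R0 * nA powr (1 - eta))) * nA powr q * (2 * (R0 * nA powr (1 - eta))) powr (1 - q)) powr m1
     \<le> (2 * ((2 * R0) powr (1 - q) * max 1 (cp * R0))) powr m1 * nA powr (- (eta * (2 - q)) * m1)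
        * (nA powr m1 * d1 powr m1 + nA powr (2 * m1) * d2 powr m1)"
proof -
  define \<beta> where "\<beta> = eta * (2 - q)"
  define E where "E = nA powr (- \<beta>)"
  define C0 where "C0 = (2 * R0) powr (1 - q) * max 1 (cp * R0)"
  define P1 where "P1 = nA powr q * nA powr ((1 - eta) * (1 - q))"
  have E0: "0 < E" using nA by (simp add: E_def)
  have C00: "0 \<le> C0" by (simp add: C0_def)
  have rho: "(2 * (R0 * nA powr (1 - eta))) powr (1 - q) = (2 * R0) powr (1 - q) * nA powr ((1 - eta) * (1 - q))"
    using nA R0 by (simp add: powr_mult powr_powr mult.assoc)
  have P1e: "P1 = nA powr (1 + (- eta * (1 - q)))"
  proof -
    have "P1 = nA powr (q + (1 - eta) * (1 - q))" by (simp add: P1_def powr_add)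
    also have "q + (1 - eta) * (1 - q) = 1 + (- eta * (1 - q))" by (simp add: algebra_simps)
    finally show ?thesis .
  qed
  have P1b: "P1 \<le> nA * E"
  proof -
    have "nA powr (- eta * (1 - q)) \<le> nA powr (- \<beta>)"
      using nA eta q by (intro powr_mono') (auto simp: \<beta>_def algebra_simps)
    then have "nA * nA powr (- eta * (1 - q)) \<le> nA * E" using nA by (simp add: E_def)
    moreover have "nA * nA powr (- eta * (1 - q)) = P1" using nA powr_mult_base[of nA "- eta * (1 - q)"] by (simp add: P1e)
    ultimately show ?thesis by simp
  qed
  have P2e: "P1 * nA powr (1 - eta) = nA powr 2 * E"
  proof -
    have X: "(1 + (- eta * (1 - q))) + (1 - eta) = 2 + (- \<beta>)" by (simp add: \<beta>_def algebra_simps)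
    have "P1 * nA powr (1 - eta) = nA powr ((1 + (- eta * (1 - q))) + (1 - eta))" by (simp only: P1e powr_add)
    also have "\<dots> = nA powr (2 + (- \<beta>))" by (simp only: X)
    also have "\<dots> = nA powr 2 * E" by (simp only: E_def powr_add)
    finally show ?thesis .
  qed
  define Bv where "Bv = (d1 + cp * d2 * (R0 * nA powr (1 - eta))) * nA powr q * (2 * (R0 * nA powr (1 - eta))) powr (1 - q)"
  define u where "u = nA * d1"
  define v where "v = nA powr 2 * d2"
  have uv0: "0 \<le> u" "0 \<le> v" using nA d by (auto simp: u_def v_def)
  have Bv0: "0 \<le> Bv" using d cp nA R0 by (simp add: Bv_def)
  have "Bv = (2 * R0) powr (1 - q) * (d1 * P1 + cp * R0 * d2 * (P1 * nA powr (1 - eta)))"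
  proof -
    define Z where "Z = nA powr ((1 - eta) * (1 - q))"
    define W where "W = nA powr (1 - eta)"
    define Qp where "Qp = nA powr q"
    define Cq where "Cq = (2 * R0) powr (1 - q)"
    have "Bv = (d1 + cp * d2 * (R0 * W)) * Qp * (Cq * Z)"
      unfolding Bv_def W_def[symmetric] Qp_def[symmetric] using rho by (simp add: W_def Cq_def Z_def)
    also have "\<dots> = Cq * (d1 * (Qp * Z) + cp * R0 * d2 * ((Qp * Z) * W))"
      by (simp add: algebra_simps)
    finally show ?thesis by (simp add: Cq_def P1_def Z_def Qp_def W_def)
  qed
  also have "\<dots> = (2 * R0) powr (1 - q) * (d1 * P1 + cp * R0 * (v * E))"
    by (simp add: P2e v_def algebra_simps)
  also have "\<dots> \<le> (2 * R0) powr (1 - q) * (d1 * (nA * E) + cp * R0 * (v * E))"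
    using P1b d by (intro mult_left_mono add_right_mono) auto
  also have "\<dots> = (2 * R0) powr (1 - q) * (E * (u + cp * R0 * v))"
    by (simp add: u_def algebra_simps)
  also have "\<dots> \<le> (2 * R0) powr (1 - q) * (E * (max 1 (cp * R0) * (u + v)))"
  proof -
    have "u + cp * R0 * v \<le> max 1 (cp * R0) * u + max 1 (cp * R0) * v"
    proof (intro add_mono mult_right_mono)
      show "u \<le> max 1 (cp * R0) * u" using uv0 mult_right_mono[of 1 "max 1 (cp * R0)" u] by simp
    qed (use uv0 in auto)
    then show ?thesis using E0 by (intro mult_left_mono) (auto simp: algebra_simps)
  qed
  also have "\<dots> = C0 * E * (u + v)" by (simp add: C0_def)
  finally have Bvb: "Bv \<le> C0 * E * (u + v)" .
  have "Bv powr m1 \<le> (C0 * E * (u + v)) powr m1"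
    using Bvb Bv0 m1 by (intro powr_mono2) auto
  also have "\<dots> = C0 powr m1 * E powr m1 * (u + v) powr m1" using C00 E0 uv0 by (simp add: powr_mult)
  also have "\<dots> \<le> C0 powr m1 * E powr m1 * (2 powr m1 * (u powr m1 + v powr m1))"
    using sum_powr_le[OF uv0 m1] by (intro mult_left_mono) auto
  also have "\<dots> = (2 * C0) powr m1 * E powr m1 * (u powr m1 + v powr m1)"
    using C00 by (simp add: powr_mult algebra_simps)
  also have "E powr m1 = nA powr (- (eta * (2 - q)) * m1)"
    by (simp add: E_def powr_powr \<beta>_def)
  also have "u powr m1 = nA powr m1 * d1 powr m1" using nA d by (simp add: u_def powr_mult)
  also have "v powr m1 = nA powr (2 * m1) * d2 powr m1" by (simp only: v_def powr_mult powr_powr)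
  finally show ?thesis by (simp add: Bv_def C0_def)
qed


lemma young_scaled:
  fixes x y F G a b :: real
  assumes "0 \<le> x" "0 \<le> y" "0 < F" "0 < G" "0 < a" "0 < b" "a + b = 1"
  shows "x powr a * y powr b \<le> F powr a * G powr b * (a * x / F + b * y / G)"
proof (cases "x = 0 \<or> y = 0")
  case True
  have "0 \<le> F powr a * G powr b * (a * x / F + b * y / G)"
    using assms by (intro mult_nonneg_nonneg add_nonneg_nonneg divide_nonneg_pos) auto
  then show ?thesis using True by auto
next
  case False
  then have xy: "0 < x" "0 < y" using assms by auto
  have "(x / F) powr a * (y / G) powr b \<le> a * (x / F) + b * (y / G)"
    using Youngs_inequality_0[of a b "x / F" "y / G"] assms xy by simp
  then have "F powr a * G powr b * ((x / F) powr a * (y / G) powr b)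
      \<le> F powr a * G powr b * (a * (x / F) + b * (y / G))"
    by (rule mult_left_mono) simp
  moreover have "F powr a * G powr b * ((x / F) powr a * (y / G) powr b) = x powr a * y powr b"
    using assms xy by (simp add: powr_divide)
  ultimately show ?thesis by simp
qed

lemma ennpow_ennreal: "0 \<le> x \<Longrightarrow> ennpow (ennreal x) r = ennreal (x powr r)"
  by (simp add: ennpow_def)

lemma ennpow_zero: "0 < r \<Longrightarrow> ennpow 0 r = 0"
  by (simp add: ennpow_def)

lemma ennpow_top: "ennpow top r = top"
  by (simp add: ennpow_def)

lemma ennpow_pos: "x \<noteq> 0 \<Longrightarrow> ennpow x r \<noteq> 0"
  by (cases x) (auto simp: ennpow_def)

lemma holder_nn:
  assumes f: "f \<in> borel_measurable M" and g: "g \<in> borel_measurable M"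
    and ab: "0 < a" "0 < b" "a + b = 1"
  shows "(\<integral>\<^sup>+x. ennpow (f x) a * ennpow (g x) b \<partial>M)
          \<le> ennpow (\<integral>\<^sup>+x. f x \<partial>M) a * ennpow (\<integral>\<^sup>+x. g x \<partial>M) b"
proof -
  define F where "F = (\<integral>\<^sup>+x. f x \<partial>M)"
  define G where "G = (\<integral>\<^sup>+x. g x \<partial>M)"
  have "(\<integral>\<^sup>+x. ennpow (f x) a * ennpow (g x) b \<partial>M) \<le> ennpow F a * ennpow G b"
  proof (cases "F = 0 \<or> G = 0")
    case True
    then have "AE x in M. f x = 0 \<or> g x = 0"
      using nn_integral_0_iff_AE[OF f] nn_integral_0_iff_AE[OF g] F_def G_def by auto
    then have "AE x in M. ennpow (f x) a * ennpow (g x) b = 0"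
      by eventually_elim (use ab in \<open>auto simp: ennpow_zero\<close>)
    then have "(\<integral>\<^sup>+x. ennpow (f x) a * ennpow (g x) b \<partial>M) = (\<integral>\<^sup>+x. 0 \<partial>M)"
      by (rule nn_integral_cong_AE)
    then have "(\<integral>\<^sup>+x. ennpow (f x) a * ennpow (g x) b \<partial>M) = 0"
      by simp
    then show ?thesis by simp
  next
    case False
    then have F0: "F \<noteq> 0" and G0: "G \<noteq> 0" by auto
    show ?thesis
    proof (cases "F = top \<or> G = top")
      case True
      then have "ennpow F a * ennpow G b = top"
        using F0 G0 ennpow_pos[OF F0] ennpow_pos[OF G0] by (auto simp: ennpow_top)
      then show ?thesis by simp
    next
      case False
      then obtain Fr Gr where Fr: "F = ennreal Fr" "0 < Fr" and Gr: "G = ennreal Gr" "0 < Gr"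
        using F0 G0 by (cases F; cases G) auto
      have fin: "AE x in M. f x \<noteq> top" "AE x in M. g x \<noteq> top"
        using nn_integral_PInf_AE[OF f] nn_integral_PInf_AE[OF g] Fr Gr F_def G_def by auto
      define c1 where "c1 = Fr powr a * Gr powr b * a / Fr"
      define c2 where "c2 = Fr powr a * Gr powr b * b / Gr"
      have c12: "0 \<le> c1" "0 \<le> c2" using ab Fr Gr by (auto simp: c1_def c2_def)
      have "AE x in M. ennpow (f x) a * ennpow (g x) b \<le> ennreal c1 * f x + ennreal c2 * g x"
        using fin
      proof eventually_elim
        case (elim x)
        then obtain xr yr where xr: "f x = ennreal xr" "0 \<le> xr" and yr: "g x = ennreal yr" "0 \<le> yr"
          by (cases "f x"; cases "g x") auto
        have "xr powr a * yr powr b \<le> Fr powr a * Gr powr b * (a * xr / Fr + b * yr / Gr)"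
          by (rule young_scaled) (use xr yr Fr Gr ab in auto)
        also have "\<dots> = c1 * xr + c2 * yr"
          by (simp add: c1_def c2_def field_simps)
        finally have "ennreal (xr powr a * yr powr b) \<le> ennreal (c1 * xr + c2 * yr)"
          by (rule ennreal_leI)
        then show ?case
          using xr yr c12 by (simp add: ennpow_ennreal ennreal_mult)
      qed
      then have "(\<integral>\<^sup>+x. ennpow (f x) a * ennpow (g x) b \<partial>M)
            \<le> (\<integral>\<^sup>+x. ennreal c1 * f x + ennreal c2 * g x \<partial>M)"
        by (rule nn_integral_mono_AE)
      also have "\<dots> = ennreal c1 * F + ennreal c2 * G"
        using f g by (simp add: nn_integral_add nn_integral_cmult F_def G_def)
      also have "\<dots> = ennreal (c1 * Fr + c2 * Gr)"
        using Fr Gr c12 by (simp add: ennreal_mult)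
      also have "c1 * Fr + c2 * Gr = Fr powr a * Gr powr b"
      proof -
        have "c1 * Fr + c2 * Gr = Fr powr a * Gr powr b * (a + b)"
          using Fr Gr by (simp add: c1_def c2_def field_simps)
        then show ?thesis using ab by simp
      qed
      also have "ennreal (Fr powr a * Gr powr b) = ennpow F a * ennpow G b"
        using Fr Gr by (simp add: ennpow_ennreal ennreal_mult)
      finally show ?thesis .
    qed
  qed
  then show ?thesis by (simp add: F_def G_def)
qed


lemma pd_field_deriv:
  fixes f :: "real^'p::finite \<Rightarrow> real"
  assumes "f differentiable (at x)"
  shows "((\<lambda>t. f (x + t *\<^sub>R axis i 1)) has_field_derivative pd i f x) (at 0)"
proof -
  obtain D where D: "(f has_derivative D) (at x)" using assms differentiable_def by blast
  have lin: "linear D" using D has_derivative_linear by blast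
  have l: "((\<lambda>t. x + t *\<^sub>R axis i 1) has_derivative (\<lambda>t. t *\<^sub>R axis i 1)) (at 0)"
    by (auto intro!: derivative_eq_intros)
  have D0: "(f has_derivative D) (at ((\<lambda>t. x + t *\<^sub>R axis i 1) 0))" using D by simp
  have "((f \<circ> (\<lambda>t. x + t *\<^sub>R axis i 1)) has_derivative (D \<circ> (\<lambda>t. t *\<^sub>R axis i 1))) (at 0)"
    by (rule diff_chain_at[OF l D0])
  moreover have "(D \<circ> (\<lambda>t. t *\<^sub>R axis i 1)) = (*) (D (axis i 1))"
    using lin by (auto simp: fun_eq_iff linear_scale)
  ultimately have "((\<lambda>t. f (x + t *\<^sub>R axis i 1)) has_field_derivative D (axis i 1)) (at 0)"
    by (simp add: has_field_derivative_def comp_def)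
  then show ?thesis using pd_eq[OF D] by simp
qed

lemma pd_limit:
  fixes f :: "real^'p::finite \<Rightarrow> real"
  assumes "f differentiable (at x)" "0 < \<delta>"
  shows "(\<lambda>n. (f (x + (\<delta> / real (Suc n)) *\<^sub>R axis i 1) - f x) / (\<delta> / real (Suc n))) \<longlonglongrightarrow> pd i f x"
proof -
  have A: "((\<lambda>y. (f (x + y *\<^sub>R axis i 1) - f x) / y) \<longlongrightarrow> pd i f x) (at 0)"
    using pd_field_deriv[OF assms(1), of i] unfolding has_field_derivative_iff by simp
  have B: "\<forall>n. \<delta> / real (Suc n) \<in> UNIV - {0}" using assms(2) by simp
  have C: "(\<lambda>n. \<delta> / real (Suc n)) \<longlonglongrightarrow> 0"
    using LIMSEQ_Suc[OF lim_const_over_n[of \<delta>]] by (simp del: of_nat_Suc)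
  have all: "\<forall>X. (\<forall>i. X i \<in> UNIV - {0}) \<longrightarrow> X \<longlonglongrightarrow> 0 \<longrightarrow> ((\<lambda>y. (f (x + y *\<^sub>R axis i 1) - f x) / y) \<circ> X) \<longlonglongrightarrow> pd i f x"
    by (rule iffD1[OF tendsto_at_iff_sequentially A])
  have "((\<lambda>y. (f (x + y *\<^sub>R axis i 1) - f x) / y) \<circ> (\<lambda>n. \<delta> / real (Suc n))) \<longlonglongrightarrow> pd i f x"
    using mp[OF mp[OF spec[OF all, of "\<lambda>n. \<delta> / real (Suc n)"] B] C] .
  then show ?thesis by (simp only: comp_def)
qed

lemma meas_pd:
  fixes F :: "'w \<Rightarrow> real^'p::finite \<Rightarrow> real"
  assumes N: "N \<in> sets M" and d0: "0 < \<delta>"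
    and h: "\<And>t. 0 \<le> t \<Longrightarrow> t \<le> \<delta> \<Longrightarrow> (\<lambda>\<omega>. if \<omega> \<in> N then 0 else F \<omega> (\<theta> + t *\<^sub>R axis i 1)) \<in> borel_measurable M"
    and d: "\<And>\<omega>. \<omega> \<in> space M \<Longrightarrow> \<omega> \<notin> N \<Longrightarrow> F \<omega> differentiable (at \<theta>)"
  shows "(\<lambda>\<omega>. if \<omega> \<in> N then 0 else pd i (F \<omega>) \<theta>) \<in> borel_measurable M"
proof (rule borel_measurable_LIMSEQ_real)
  define X where "X n = \<delta> / real (Suc n)" for n
  have X: "0 < X n" "X n \<le> \<delta>" for n
    using d0 by (auto simp: X_def field_simps)
  let ?u = "\<lambda>n \<omega>. ((if \<omega> \<in> N then 0 else F \<omega> (\<theta> + X n *\<^sub>R axis i 1))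
                  - (if \<omega> \<in> N then 0 else F \<omega> (\<theta> + 0 *\<^sub>R axis i 1))) / X n"
  show "?u n \<in> borel_measurable M" for n
  proof -
    have m1: "(\<lambda>\<omega>. if \<omega> \<in> N then 0 else F \<omega> (\<theta> + X n *\<^sub>R axis i 1)) \<in> borel_measurable M"
      by (rule h) (use X[of n] in auto)
    have m0: "(\<lambda>\<omega>. if \<omega> \<in> N then 0 else F \<omega> (\<theta> + 0 *\<^sub>R axis i 1)) \<in> borel_measurable M"
      by (rule h) (use d0 in auto)
    show ?thesis by (intro borel_measurable_divide borel_measurable_diff m1 m0 borel_measurable_const)
  qed
  fix \<omega> assume \<omega>: "\<omega> \<in> space M"
  show "(\<lambda>n. ?u n \<omega>) \<longlonglongrightarrow> (if \<omega> \<in> N then 0 else pd i (F \<omega>) \<theta>)"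
  proof (cases "\<omega> \<in> N")
    case True then show ?thesis by simp
  next
    case False
    then show ?thesis using pd_limit[OF d[OF \<omega> False] d0, of i] by (simp add: X_def)
  qed
qed


lemma ennpow_meas[measurable]:
  assumes [measurable]: "f \<in> borel_measurable M"
  shows "(\<lambda>x. ennpow (f x) r) \<in> borel_measurable M"
  unfolding ennpow_def by measurable

lemma meas_restr0:
  assumes N: "N \<in> sets M" and Hm: "(\<lambda>\<omega>. H \<omega> \<theta>) \<in> borel_measurable M"
  shows "(\<lambda>\<omega>. if \<omega> \<in> N then 0 else H \<omega> \<theta>) \<in> borel_measurable M"
  by (rule measurable_If_set[OF borel_measurable_const Hm]) (use N in auto)

lemma meas_pd1:
  fixes H :: "'w \<Rightarrow> real^'p::finite \<Rightarrow> real"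
  assumes N: "N \<in> sets M" and Hm: "\<And>\<theta>. (\<lambda>\<omega>. H \<omega> \<theta>) \<in> borel_measurable M"
    and td: "\<And>\<omega>. \<omega> \<in> space M \<Longrightarrow> \<omega> \<notin> N \<Longrightarrow> thrice_diff_on (H \<omega>) B"
    and th: "\<theta> \<in> B"
  shows "(\<lambda>\<omega>. if \<omega> \<in> N then 0 else pd i (H \<omega>) \<theta>) \<in> borel_measurable M"
proof (rule meas_pd[OF N, of 1])
  show "(\<lambda>\<omega>. if \<omega> \<in> N then 0 else H \<omega> (\<theta> + t *\<^sub>R axis i 1)) \<in> borel_measurable M" for t
    by (rule meas_restr0[OF N Hm])
  show "H \<omega> differentiable (at \<theta>)" if "\<omega> \<in> space M" "\<omega> \<notin> N" for \<omega>
    using td[OF that] th unfolding thrice_diff_on_def by blast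
qed simp

lemma meas_pd2:
  fixes H :: "'w \<Rightarrow> real^'p::finite \<Rightarrow> real"
  assumes N: "N \<in> sets M" and Hm: "\<And>\<theta>. (\<lambda>\<omega>. H \<omega> \<theta>) \<in> borel_measurable M"
    and td: "\<And>\<omega>. \<omega> \<in> space M \<Longrightarrow> \<omega> \<notin> N \<Longrightarrow> thrice_diff_on (H \<omega>) B"
    and B: "open B" and th: "\<theta> \<in> B"
  shows "(\<lambda>\<omega>. if \<omega> \<in> N then 0 else pd j (pd i (H \<omega>)) \<theta>) \<in> borel_measurable M"
proof -
  obtain e where e: "0 < e" "ball \<theta> e \<subseteq> B" using B th openE by blast
  show ?thesis
  proof (rule meas_pd[OF N, of "e / 2"])
    show "0 < e / 2" using e by simp
    fix t :: real assume t: "0 \<le> t" "t \<le> e / 2"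
    have "\<theta> + t *\<^sub>R axis j 1 \<in> ball \<theta> e"
      using t e by (simp add: dist_norm)
    then have tB: "\<theta> + t *\<^sub>R axis j 1 \<in> B" using e by blast
    show "(\<lambda>\<omega>. if \<omega> \<in> N then 0 else pd i (H \<omega>) (\<theta> + t *\<^sub>R axis j 1)) \<in> borel_measurable M"
      using meas_pd1[OF N Hm td tB, of i] .
  next
    show "pd i (H \<omega>) differentiable (at \<theta>)" if "\<omega> \<in> space M" "\<omega> \<notin> N" for \<omega>
      using td[OF that] th unfolding thrice_diff_on_def by blast
  qed
qed

lemma meas_dnorm1:
  fixes H :: "'w \<Rightarrow> real^'p::finite \<Rightarrow> real"
  assumes N: "N \<in> sets M" and Hm: "\<And>\<theta>. (\<lambda>\<omega>. H \<omega> \<theta>) \<in> borel_measurable M"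
    and td: "\<And>\<omega>. \<omega> \<in> space M \<Longrightarrow> \<omega> \<notin> N \<Longrightarrow> thrice_diff_on (H \<omega>) B"
    and th: "\<theta> \<in> B"
  shows "(\<lambda>\<omega>. if \<omega> \<in> N then 0 else dnorm1 (H \<omega>) \<theta>) \<in> borel_measurable M"
proof -
  have [measurable]: "\<And>i. (\<lambda>\<omega>. if \<omega> \<in> N then 0 else pd i (H \<omega>) \<theta>) \<in> borel_measurable M"
    by (rule meas_pd1[OF N Hm td th])
  have "(\<lambda>\<omega>. if \<omega> \<in> N then 0 else dnorm1 (H \<omega>) \<theta>)
        = (\<lambda>\<omega>. sqrt (\<Sum>i\<in>UNIV. (if \<omega> \<in> N then 0 else pd i (H \<omega>) \<theta>)\<^sup>2))"
    by (auto simp: fun_eq_iff dnorm1_def)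
  also have "\<dots> \<in> borel_measurable M" by measurable
  finally show ?thesis .
qed

lemma meas_dnorm2:
  fixes H :: "'w \<Rightarrow> real^'p::finite \<Rightarrow> real"
  assumes N: "N \<in> sets M" and Hm: "\<And>\<theta>. (\<lambda>\<omega>. H \<omega> \<theta>) \<in> borel_measurable M"
    and td: "\<And>\<omega>. \<omega> \<in> space M \<Longrightarrow> \<omega> \<notin> N \<Longrightarrow> thrice_diff_on (H \<omega>) B"
    and B: "open B" and th: "\<theta> \<in> B"
  shows "(\<lambda>\<omega>. if \<omega> \<in> N then 0 else dnorm2 (H \<omega>) \<theta>) \<in> borel_measurable M"
proof -
  have [measurable]: "\<And>i j. (\<lambda>\<omega>. if \<omega> \<in> N then 0 else pd j (pd i (H \<omega>)) \<theta>) \<in> borel_measurable M"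
    by (rule meas_pd2[OF N Hm td B th])
  have "(\<lambda>\<omega>. if \<omega> \<in> N then 0 else dnorm2 (H \<omega>) \<theta>)
        = (\<lambda>\<omega>. sqrt (\<Sum>i\<in>UNIV. \<Sum>j\<in>UNIV. (if \<omega> \<in> N then 0 else pd j (pd i (H \<omega>)) \<theta>)\<^sup>2))"
    by (auto simp: fun_eq_iff dnorm2_def)
  also have "\<dots> \<in> borel_measurable M" by measurable
  finally show ?thesis .
qed


lemma dnorm2_cont:
  assumes "thrice_diff_on h B"
  shows "continuous_on B (dnorm2 h)"
proof -
  have c: "continuous_on B (pd j (pd i h))" for i j
    using assms unfolding thrice_diff_on_def
    by (intro continuous_at_imp_continuous_on ballI differentiable_imp_continuous_within) auto
  show ?thesis unfolding dnorm2_def[abs_def]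
    by (intro continuous_intros c)
qed



lemma sup_dense:
  fixes \<phi> :: "'a::topological_space \<Rightarrow> real"
  assumes c: "continuous_on B \<phi>" and B: "open B" and z: "z \<in> B"
    and nn: "\<And>x. 0 \<le> \<phi> x"
    and D: "\<And>X. open X \<Longrightarrow> X \<noteq> {} \<Longrightarrow> \<exists>d\<in>D. d \<in> X"
  shows "ennreal (\<phi> z) \<le> (SUP \<theta>\<in>D \<inter> B. ennreal (\<phi> \<theta>))"
proof (rule ennreal_le_epsilon)
  fix e :: real assume e: "0 < e"
  define X where "X = \<phi> -` {\<phi> z - e <..} \<inter> B"
  have allo: "\<forall>A. open A \<longrightarrow> open (\<phi> -` A \<inter> B)" using iffD1[OF continuous_on_open_vimage[OF B] c] .
  have "open X" unfolding X_def using allo[rule_format, OF open_greaterThan] .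
  moreover have "z \<in> X" using z e by (simp add: X_def)
  ultimately obtain d where d: "d \<in> D" "d \<in> X" using D by blast
  then have dB: "d \<in> D \<inter> B" and lt: "\<phi> z \<le> \<phi> d + e" by (auto simp: X_def)
  have "ennreal (\<phi> z) \<le> ennreal (\<phi> d + e)" using lt by (rule ennreal_leI)
  also have "\<dots> \<le> ennreal (\<phi> d) + ennreal e"
    using e nn[of d] by simp
  also have "\<dots> \<le> (SUP \<theta>\<in>D \<inter> B. ennreal (\<phi> \<theta>)) + ennreal e"
    using dB by (intro add_right_mono SUP_upper)
  finally show "ennreal (\<phi> z) \<le> (SUP \<theta>\<in>D \<inter> B. ennreal (\<phi> \<theta>)) + ennreal e" .
qed



lemma G_meas:
  fixes xi :: "'w \<Rightarrow> 'p::finite \<Rightarrow> real"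
  assumes al: "\<forall>j. al j \<noteq> 0" and xm: "\<And>j. (\<lambda>\<omega>. xi \<omega> j) \<in> borel_measurable M"
  shows "(\<lambda>\<omega>. specnorm (G00 ths al (xi \<omega>) q)) \<in> borel_measurable M"
proof -
  have [measurable]: "\<And>j. (\<lambda>\<omega>. xi \<omega> j) \<in> borel_measurable M" by (rule xm)
  have "(\<lambda>\<omega>. specnorm (G00 ths al (xi \<omega>) q))
      = (\<lambda>\<omega>. Max ((\<lambda>j. \<bar>if ths $ j = 0 then xi \<omega> j powr (- 1 / q) / al j else 0\<bar>) ` UNIV))"
    by (simp add: G00_diag[OF al] specnorm_diagm)
  also have "\<dots> \<in> borel_measurable M"
    by (intro borel_measurable_Max) measurable
  finally show ?thesis .
qed




lemma ennpow_mono: "x \<le> y \<Longrightarrow> 0 \<le> r \<Longrightarrow> ennpow x r \<le> ennpow y r"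
proof (cases "y = top")
  case True then show ?thesis by (simp add: ennpow_top)
next
  case False
  assume xy: "x \<le> y" and r: "0 \<le> r"
  then have "x \<noteq> top" using False top_unique by auto
  then obtain a b where a: "x = ennreal a" "0 \<le> a" and b: "y = ennreal b" "0 \<le> b"
    using False by (cases x; cases y) auto
  then have "a \<le> b" using xy by simp
  then show ?thesis using a b r by (simp add: ennpow_ennreal powr_mono2)
qed

lemma pointwise:
  fixes h :: "real^'p::finite \<Rightarrow> real" and al :: "'p \<Rightarrow> real"
  assumes td: "thrice_diff_on h B" and ballB: "ball ths R0 \<subseteq> B" and R0: "0 < R0"
    and nA: "0 < specnorm (diagm al)" "specnorm (diagm al) \<le> 1"
    and q: "0 < q" "q \<le> 1" and eta: "0 < eta" "eta \<le> 1" and m1: "0 < m1"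
    and D2b: "\<forall>z\<in>ball ths R0. ennreal (dnorm2 h z) \<le> D2"
  shows "ennpow (holder_const h Th ths al q eta R0) m1 \<le>
     ennreal ((2 * ((2 * R0) powr (1 - q) * max 1 (sqrt (real CARD('p)) * R0))) powr m1
              * specnorm (diagm al) powr (- (eta * (2 - q)) * m1)) *
     (ennreal (specnorm (diagm al) powr m1 * dnorm1 h ths powr m1) +
      ennreal (specnorm (diagm al) powr (2 * m1)) * ennpow D2 m1)"
proof -
  define nA where "nA = specnorm (diagm al)"
  define cp where "cp = sqrt (real CARD('p))"
  define K1E where "K1E = (2 * ((2 * R0) powr (1 - q) * max 1 (cp * R0))) powr m1 * nA powr (- (eta * (2 - q)) * m1)"
  have nA0: "0 < nA" using nA by (simp add: nA_def)
  have cp0: "0 \<le> cp" by (simp add: cp_def)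
  have K1E0: "0 < K1E"
  proof -
    have "0 < (2 * R0) powr (1 - q) * max 1 (cp * R0)" using R0 by (simp add: max_def)
    then show ?thesis using nA0 unfolding K1E_def by (intro mult_pos_pos) auto
  qed
  have goal: "ennpow (holder_const h Th ths al q eta R0) m1 \<le>
     ennreal K1E * (ennreal (nA powr m1 * dnorm1 h ths powr m1) + ennreal (nA powr (2 * m1)) * ennpow D2 m1)"
  proof (cases "D2 = top")
    case True
    have "ennreal (nA powr (2 * m1)) \<noteq> 0" using nA0 by simp
    then have "ennreal (nA powr (2 * m1)) * ennpow D2 m1 = top" using True by (simp add: ennpow_top)
    moreover have "ennreal K1E \<noteq> 0" using K1E0 by simp
    ultimately have "ennreal K1E * (ennreal (nA powr m1 * dnorm1 h ths powr m1) + ennreal (nA powr (2 * m1)) * ennpow D2 m1) = top"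
      by simp
    then show ?thesis by simp
  next
    case False
    then obtain d2 where d2: "D2 = ennreal d2" "0 \<le> d2" by (cases D2) auto
    have dz: "\<forall>z\<in>ball ths R0. dnorm2 h z \<le> d2" using D2b d2 by auto
    define \<rho> where "\<rho> = R0 * nA powr (1 - eta)"
    have rho: "\<rho> \<le> R0"
    proof -
      have "nA powr (1 - eta) \<le> 1" using nA nA0 eta by (intro powr_le1) (auto simp: nA_def)
      then show ?thesis using R0 by (simp add: \<rho>_def mult_left_le)
    qed
    define L where "L = dnorm1 h ths + cp * d2 * \<rho>"
    have d10: "0 \<le> dnorm1 h ths" by (simp add: dnorm1_def sum_nonneg)
    have rho0: "0 \<le> \<rho>" using R0 nA0 by (simp add: \<rho>_def)
    have L0: "0 \<le> L" using d10 cp0 d2 rho0 by (simp add: L_def)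
    have tdu: "\<forall>z\<in>B. h differentiable (at z)" "\<forall>z\<in>B. \<forall>i. pd i h differentiable (at z)"
      using td unfolding thrice_diff_on_def by auto
    have lipH: "\<forall>x\<in>ball ths \<rho>. \<forall>y\<in>ball ths \<rho>. \<bar>h x - h y\<bar> \<le> L * norm (x - y)"
    proof (intro ballI)
      fix x y assume xy: "x \<in> ball ths \<rho>" "y \<in> ball ths \<rho>"
      show "\<bar>h x - h y\<bar> \<le> L * norm (x - y)"
        unfolding L_def cp_def
        by (rule ball_lip[where r=R0]) (use tdu ballB dz d2 rho xy in blast)+
    qed
    have hb: "holder_const h Th ths al q eta R0 \<le> ennreal (L * nA powr q * (2 * \<rho>) powr (1 - q))"
      unfolding nA_def \<rho>_def
      by (rule holder_bound) (use nA q R0 L0 lipH in \<open>auto simp: nA_def \<rho>_def\<close>)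
    have "ennpow (holder_const h Th ths al q eta R0) m1 \<le> ennpow (ennreal (L * nA powr q * (2 * \<rho>) powr (1 - q))) m1"
      using hb m1 by (intro ennpow_mono) auto
    also have "\<dots> = ennreal ((L * nA powr q * (2 * \<rho>) powr (1 - q)) powr m1)"
      using L0 by (simp add: ennpow_ennreal)
    also have "\<dots> \<le> ennreal (K1E * (nA powr m1 * dnorm1 h ths powr m1 + nA powr (2 * m1) * d2 powr m1))"
      unfolding K1E_def L_def \<rho>_def
      by (intro ennreal_leI real_ineq) (use nA0 nA R0 q eta m1 d10 d2 cp0 in \<open>auto simp: nA_def\<close>)
    also have "\<dots> = ennreal K1E * (ennreal (nA powr m1 * dnorm1 h ths powr m1) + ennreal (nA powr (2 * m1)) * ennpow D2 m1)"
    proof -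
      have n1: "0 \<le> nA powr m1 * dnorm1 h ths powr m1" by simp
      have n2: "0 \<le> nA powr (2 * m1) * d2 powr m1" by simp
      have "ennreal (nA powr m1 * dnorm1 h ths powr m1 + nA powr (2 * m1) * d2 powr m1)
          = ennreal (nA powr m1 * dnorm1 h ths powr m1) + ennreal (nA powr (2 * m1) * d2 powr m1)"
        using n1 n2 by (rule ennreal_plus)
      moreover have "ennreal (nA powr (2 * m1) * d2 powr m1) = ennreal (nA powr (2 * m1)) * ennreal (d2 powr m1)"
        by (rule ennreal_mult) simp_all
      moreover have "ennreal (K1E * (nA powr m1 * dnorm1 h ths powr m1 + nA powr (2 * m1) * d2 powr m1))
          = ennreal K1E * ennreal (nA powr m1 * dnorm1 h ths powr m1 + nA powr (2 * m1) * d2 powr m1)"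
        using K1E0 n1 n2 by (intro ennreal_mult) auto
      ultimately show ?thesis using d2 by (simp add: ennpow_ennreal)
    qed
    finally show ?thesis .
  qed
  then show ?thesis by (simp add: K1E_def nA_def cp_def)
qed


lemma ennpow_ennpow: "ennpow (ennpow x r) s = ennpow x (r * s)"
  by (cases x) (auto simp: ennpow_def powr_powr)

theorem proposition6:
  fixes P :: "'w measure"
    and Th :: "(real^'p::finite) set"
    and ths :: "real^'p"
    and Tset :: "real set"
    and H :: "real \<Rightarrow> 'w \<Rightarrow> real^'p \<Rightarrow> real"
    and xi :: "real \<Rightarrow> 'w \<Rightarrow> 'p \<Rightarrow> real"
    and al :: "real \<Rightarrow> 'p \<Rightarrow> real"
    and q eta R0s m1 :: real
  assumes P: "prob_space P"
    and Th: "bounded Th" "open Th" "ths \<in> Th"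
    and Tset: "Tset \<subseteq> {0..}" "\<forall>M. \<exists>T\<in>Tset. T > M"
    and H_meas: "\<forall>T\<in>Tset. \<forall>\<theta>. (\<lambda>\<omega>. H T \<omega> \<theta>) \<in> borel_measurable P"
    and H_cont: "\<forall>T\<in>Tset. \<forall>\<omega>\<in>space P. continuous_on (closure Th) (H T \<omega>)"
    and xi_meas: "\<forall>T\<in>Tset. \<forall>j. (\<lambda>\<omega>. xi T \<omega> j) \<in> borel_measurable P"
    and xi_pos: "\<forall>T\<in>Tset. \<forall>\<omega>\<in>space P. \<forall>j. xi T \<omega> j > 0"
    and al_nz: "\<forall>T\<in>Tset. \<forall>j. al T j \<noteq> 0"
    and al_lim: "\<forall>\<epsilon>>0. \<exists>T0. \<forall>T\<in>Tset. T \<ge> T0 \<longrightarrow> specnorm (diagm (al T)) < \<epsilon>"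
    and q: "0 < q" "q \<le> 1"
    and eta: "0 < eta" "eta \<le> 1"
    and R0s: "R0s > 0"
    and m1: "m1 > 0"
    and A12_i: "\<forall>T\<in>Tset. AE \<omega> in P.
                  thrice_diff_on (H T \<omega>) {\<theta>\<in>Th. dist \<theta> ths < R0s}"
    and A12_ii: "(SUP T\<in>Tset. \<integral>\<^sup>+ \<omega>. ennreal
                    (specnorm (diagm (al T)) powr m1 * dnorm1 (H T \<omega>) ths powr m1) \<partial>P) < \<top>"
    and A12_iii: "(SUP T\<in>Tset. \<integral>\<^sup>+ \<omega>. ennreal (specnorm (diagm (al T)) powr (2 * m1)) *
                    ennpow (SUP \<theta>\<in>{\<theta>\<in>Th. dist \<theta> ths < R0s}. ennreal (dnorm2 (H T \<omega>) \<theta>)) m1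
                    \<partial>P) < \<top>"
    and A12_iv: "(SUP T\<in>Tset. \<integral>\<^sup>+ \<omega>. ennreal (specnorm (diagm (al T)) powr (2 * m1)) *
                    ennpow (SUP \<theta>\<in>{\<theta>\<in>Th. dist \<theta> ths < R0s}. ennreal (dnorm3 (H T \<omega>) \<theta>)) m1
                    \<partial>P) < \<top>"
  shows "\<forall>m2>0. \<exists>R0>0. \<exists>K>0. \<forall>T\<in>Tset. specnorm (diagm (al T)) \<le> 1 \<longrightarrow>
           (let m = m1 * m2 / (q * m1 + m2) in
            (\<integral>\<^sup>+ \<omega>. ennpow (holder_const (H T \<omega>) Th ths (al T) q eta R0) m *
                     ennreal (specnorm (G00 ths (al T) (xi T \<omega>) q) powr (q * m)) \<partial>P))
           \<le> ennreal (K * specnorm (diagm (al T)) powr (- (eta * (2 - q) * m1 * m2 / (q * m1 + m2)))) *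
             ennpow (\<integral>\<^sup>+ \<omega>. ennreal (specnorm (G00 ths (al T) (xi T \<omega>) q) powr m2) \<partial>P)
                    (q * m1 / (q * m1 + m2))"
proof (intro allI impI)
  fix m2 :: real assume m2: "m2 > 0"
  define B where "B = {\<theta>\<in>Th. dist \<theta> ths < R0s}"
  have Bopen: "open B"
  proof -
    have "B = Th \<inter> ball ths R0s" by (auto simp: B_def dist_commute)
    then show ?thesis using Th(2) by auto
  qed
  have thsB: "ths \<in> B" using Th(3) R0s by (simp add: B_def)
  obtain r where r: "0 < r" "ball ths r \<subseteq> Th" using Th(2) Th(3) openE by blast
  define R0 where "R0 = min r R0s"
  have R0pos: "0 < R0" using r R0s by (simp add: R0_def)
  have ballB: "ball ths R0 \<subseteq> B"
  proof
    fix z assume "z \<in> ball ths R0"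
    then have "dist ths z < r" "dist ths z < R0s" by (auto simp: R0_def)
    then show "z \<in> B" using r by (auto simp: B_def dist_commute)
  qed
  define cp where "cp = sqrt (real CARD('p))"
  define K1 where "K1 = (2 * ((2 * R0) powr (1 - q) * max 1 (cp * R0))) powr m1"
  have K1pos: "0 < K1"
  proof -
    have "0 < (2 * R0) powr (1 - q) * max 1 (cp * R0)" using R0pos by (simp add: max_def)
    then show ?thesis unfolding K1_def using R0pos by (auto simp: max_def)
  qed
  define S2 where "S2 = (SUP T\<in>Tset. \<integral>\<^sup>+ \<omega>. ennreal
                    (specnorm (diagm (al T)) powr m1 * dnorm1 (H T \<omega>) ths powr m1) \<partial>P)"
  define S3 where "S3 = (SUP T\<in>Tset. \<integral>\<^sup>+ \<omega>. ennreal (specnorm (diagm (al T)) powr (2 * m1)) *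
                    ennpow (SUP \<theta>\<in>B. ennreal (dnorm2 (H T \<omega>) \<theta>)) m1 \<partial>P)"
  have S2fin: "S2 < top" using A12_ii by (simp add: S2_def)
  have S3fin: "S3 < top" using A12_iii by (simp add: S3_def B_def)
  define s where "s = enn2real S2 + enn2real S3 + 1"
  have s0: "0 < s" by (simp add: s_def enn2real_nonneg add_nonneg_pos)
  have S23: "S2 + S3 \<le> ennreal s"
  proof -
    have "S2 = ennreal (enn2real S2)" "S3 = ennreal (enn2real S3)" using S2fin S3fin by auto
    then have "S2 + S3 = ennreal (enn2real S2 + enn2real S3)" by (simp add: enn2real_nonneg)
    then show ?thesis by (simp add: s_def enn2real_nonneg add_nonneg_nonneg)
  qed
  define a where "a = m2 / (q * m1 + m2)"
  define b where "b = q * m1 / (q * m1 + m2)"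
  have qm: "0 < q * m1 + m2" using q m1 m2 by (simp add: add_pos_pos)
  have ab1: "0 < a" unfolding a_def using m2 qm by (rule divide_pos_pos)
  have ab2: "0 < b" unfolding b_def using q m1 qm by (intro divide_pos_pos mult_pos_pos)
  have ab3: "a + b = 1"
  proof -
    have "a + b = (m2 + q * m1) / (q * m1 + m2)" by (simp add: a_def b_def add_divide_distrib)
    then show ?thesis using qm by (simp add: add.commute)
  qed
  note ab = ab1 ab2 ab3
  define K where "K = (K1 * s) powr a"
  have Kpos: "0 < K" using K1pos s0 by (simp add: K_def)
  obtain D :: "(real^'p) set" where Dc: "countable D" and Dd: "\<And>X. open X \<Longrightarrow> X \<noteq> {} \<Longrightarrow> \<exists>d\<in>D. d \<in> X"
    by (rule countable_dense_setE) blast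
  show "\<exists>R0>0. \<exists>K>0. \<forall>T\<in>Tset. specnorm (diagm (al T)) \<le> 1 \<longrightarrow>
           (let m = m1 * m2 / (q * m1 + m2) in
            (\<integral>\<^sup>+ \<omega>. ennpow (holder_const (H T \<omega>) Th ths (al T) q eta R0) m *
                     ennreal (specnorm (G00 ths (al T) (xi T \<omega>) q) powr (q * m)) \<partial>P))
           \<le> ennreal (K * specnorm (diagm (al T)) powr (- (eta * (2 - q) * m1 * m2 / (q * m1 + m2)))) *
             ennpow (\<integral>\<^sup>+ \<omega>. ennreal (specnorm (G00 ths (al T) (xi T \<omega>) q) powr m2) \<partial>P)
                    (q * m1 / (q * m1 + m2))"
  proof (rule exI[of _ R0], intro conjI R0pos, rule exI[of _ K], intro conjI Kpos ballI impI)
    fix T assume T: "T \<in> Tset" and nA1: "specnorm (diagm (al T)) \<le> 1"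
    define nA where "nA = specnorm (diagm (al T))"
    have nA0: "0 < nA"
    proof -
      obtain j :: 'p where True by blast
      have "\<bar>al T j\<bar> \<le> nA" unfolding nA_def specnorm_diagm by simp
      moreover have "al T j \<noteq> 0" using al_nz T by blast
      ultimately show ?thesis by linarith
    qed
    have AEt: "AE \<omega> in P. thrice_diff_on (H T \<omega>) B" using A12_i T unfolding B_def by blast
    then obtain N where N: "{\<omega> \<in> space P. \<not> thrice_diff_on (H T \<omega>) B} \<subseteq> N" "emeasure P N = 0" "N \<in> sets P"
      by (rule AE_E)
    have good: "\<And>\<omega>. \<omega> \<in> space P \<Longrightarrow> \<omega> \<notin> N \<Longrightarrow> thrice_diff_on (H T \<omega>) B" using N(1) by blast
    have Hm: "\<And>\<theta>. (\<lambda>\<omega>. H T \<omega> \<theta>) \<in> borel_measurable P" using H_meas T by blast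
    define Y1 where "Y1 \<omega> = ennreal (nA powr m1 * (if \<omega> \<in> N then 0 else dnorm1 (H T \<omega>) ths) powr m1)" for \<omega>
    define D2 where "D2 \<omega> = (SUP \<theta>\<in>D \<inter> B. ennreal (if \<omega> \<in> N then 0 else dnorm2 (H T \<omega>) \<theta>))" for \<omega>
    define Y2 where "Y2 \<omega> = ennreal (nA powr (2 * m1)) * ennpow (D2 \<omega>) m1" for \<omega>
    define KE where "KE = K1 * nA powr (- (eta * (2 - q)) * m1)"
    define Fm where "Fm \<omega> = ennreal KE * (Y1 \<omega> + Y2 \<omega>)" for \<omega>
    define Gn where "Gn \<omega> = specnorm (G00 ths (al T) (xi T \<omega>) q)" for \<omega>
    define g where "g \<omega> = ennreal (Gn \<omega> powr m2)" for \<omega>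
    have KE0: "0 < KE" using K1pos nA0 by (simp add: KE_def)
    have [measurable]: "(\<lambda>\<omega>. if \<omega> \<in> N then 0 else dnorm1 (H T \<omega>) ths) \<in> borel_measurable P"
      by (rule meas_dnorm1[OF N(3) Hm good thsB])
    have dm: "\<And>\<theta>. \<theta> \<in> D \<inter> B \<Longrightarrow> (\<lambda>\<omega>. ennreal (if \<omega> \<in> N then 0 else dnorm2 (H T \<omega>) \<theta>)) \<in> borel_measurable P"
      by (intro measurable_compose[OF _ measurable_ennreal] meas_dnorm2[OF N(3) Hm good Bopen]) auto
    have D2m[measurable]: "D2 \<in> borel_measurable P" unfolding D2_def
      by (rule borel_measurable_SUP) (use Dc dm in auto)
    have Gm[measurable]: "Gn \<in> borel_measurable P" unfolding Gn_def
      by (rule G_meas) (use al_nz T xi_meas in auto)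
    have Y1m[measurable]: "Y1 \<in> borel_measurable P" unfolding Y1_def by measurable
    have Y2m[measurable]: "Y2 \<in> borel_measurable P" unfolding Y2_def by measurable
    have Fmm: "Fm \<in> borel_measurable P" unfolding Fm_def by measurable
    have gm: "g \<in> borel_measurable P" unfolding g_def by measurable
    have ma: "m1 * m2 / (q * m1 + m2) = m1 * a" by (simp add: a_def)
    have pw: "AE \<omega> in P. ennpow (holder_const (H T \<omega>) Th ths (al T) q eta R0) (m1 * a) *
                ennreal (Gn \<omega> powr (q * (m1 * a))) \<le> ennpow (Fm \<omega>) a * ennpow (g \<omega>) b"
    proof -
      have "AE \<omega> in P. \<omega> \<notin> N" using N by (intro AE_not_in) (simp add: null_sets_def)
      with AE_space show ?thesis
      proof eventually_elim
        case (elim \<omega>)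
        then have td: "thrice_diff_on (H T \<omega>) B" using good by blast
        have D2b: "\<forall>z\<in>ball ths R0. ennreal (dnorm2 (H T \<omega>) z) \<le> D2 \<omega>"
        proof
          fix z assume "z \<in> ball ths R0"
          then have zB: "z \<in> B" using ballB by blast
          have "ennreal (dnorm2 (H T \<omega>) z) \<le> (SUP \<theta>\<in>D \<inter> B. ennreal (dnorm2 (H T \<omega>) \<theta>))"
            by (rule sup_dense[OF dnorm2_cont[OF td] Bopen zB _ Dd]) (simp_all add: dnorm2_def sum_nonneg)
          then show "ennreal (dnorm2 (H T \<omega>) z) \<le> D2 \<omega>" using elim by (simp add: D2_def)
        qed
        have c1: "ennpow (holder_const (H T \<omega>) Th ths (al T) q eta R0) m1 \<le> Fm \<omega>"
          using pointwise[OF td ballB R0pos nA0[unfolded nA_def] nA1 q eta m1 D2b] elim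
          by (simp add: Fm_def KE_def K1_def cp_def nA_def Y1_def Y2_def)
        have "ennpow (holder_const (H T \<omega>) Th ths (al T) q eta R0) (m1 * a)
              = ennpow (ennpow (holder_const (H T \<omega>) Th ths (al T) q eta R0) m1) a"
          by (simp add: ennpow_ennpow)
        also have "\<dots> \<le> ennpow (Fm \<omega>) a" using c1 ab by (intro ennpow_mono) auto
        finally have h1: "ennpow (holder_const (H T \<omega>) Th ths (al T) q eta R0) (m1 * a) \<le> ennpow (Fm \<omega>) a" .
        have "ennpow (g \<omega>) b = ennreal ((Gn \<omega> powr m2) powr b)" by (simp add: g_def ennpow_ennreal)
        also have "(Gn \<omega> powr m2) powr b = Gn \<omega> powr (q * (m1 * a))"
        proof -
          have "m2 * b = q * (m1 * a)" using qm by (simp add: a_def b_def field_simps)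
          then show ?thesis by (simp add: powr_powr)
        qed
        finally have h2: "ennreal (Gn \<omega> powr (q * (m1 * a))) = ennpow (g \<omega>) b" by simp
        show ?case using h1 h2 by (simp add: mult_right_mono)
      qed
    qed
    have FmB: "ennpow (\<integral>\<^sup>+\<omega>. Fm \<omega> \<partial>P) a \<le> ennreal (K * nA powr (- (eta * (2 - q) * m1 * m2 / (q * m1 + m2))))"
    proof -
      have i1: "(\<integral>\<^sup>+\<omega>. Y1 \<omega> \<partial>P) \<le> S2"
      proof -
        have "(\<integral>\<^sup>+\<omega>. Y1 \<omega> \<partial>P) \<le> (\<integral>\<^sup>+ \<omega>. ennreal (nA powr m1 * dnorm1 (H T \<omega>) ths powr m1) \<partial>P)"
          by (intro nn_integral_mono) (auto simp: Y1_def)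
        also have "\<dots> \<le> S2" unfolding S2_def nA_def using T by (rule SUP_upper)
        finally show ?thesis .
      qed
      have i2: "(\<integral>\<^sup>+\<omega>. Y2 \<omega> \<partial>P) \<le> S3"
      proof -
        have "(\<integral>\<^sup>+\<omega>. Y2 \<omega> \<partial>P) \<le> (\<integral>\<^sup>+ \<omega>. ennreal (nA powr (2 * m1)) *
                    ennpow (SUP \<theta>\<in>B. ennreal (dnorm2 (H T \<omega>) \<theta>)) m1 \<partial>P)"
        proof (intro nn_integral_mono)
          fix \<omega>
          have "D2 \<omega> \<le> (SUP \<theta>\<in>B. ennreal (dnorm2 (H T \<omega>) \<theta>))"
            unfolding D2_def by (rule SUP_subset_mono) (auto simp: dnorm2_def)
          then show "Y2 \<omega> \<le> ennreal (nA powr (2 * m1)) * ennpow (SUP \<theta>\<in>B. ennreal (dnorm2 (H T \<omega>) \<theta>)) m1"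
            unfolding Y2_def using m1 by (intro mult_left_mono ennpow_mono) auto
        qed
        also have "\<dots> \<le> S3" unfolding S3_def nA_def using T by (rule SUP_upper)
        finally show ?thesis .
      qed
      have "(\<integral>\<^sup>+\<omega>. Fm \<omega> \<partial>P) = ennreal KE * ((\<integral>\<^sup>+\<omega>. Y1 \<omega> \<partial>P) + (\<integral>\<^sup>+\<omega>. Y2 \<omega> \<partial>P))"
        unfolding Fm_def by (simp add: nn_integral_cmult nn_integral_add)
      also have "\<dots> \<le> ennreal KE * ennreal s"
        using i1 i2 S23 by (intro mult_left_mono) (auto intro: order_trans add_mono)
      also have "\<dots> = ennreal (KE * s)" using KE0 s0 by (simp add: ennreal_mult)
      finally have "ennpow (\<integral>\<^sup>+\<omega>. Fm \<omega> \<partial>P) a \<le> ennpow (ennreal (KE * s)) a"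
        using ab by (intro ennpow_mono) auto
      also have "\<dots> = ennreal ((KE * s) powr a)" using KE0 s0 by (simp add: ennpow_ennreal)
      also have "(KE * s) powr a = K * nA powr (- (eta * (2 - q) * m1 * m2 / (q * m1 + m2)))"
      proof -
        have "(KE * s) powr a = (K1 * s) powr a * (nA powr (- (eta * (2 - q)) * m1)) powr a"
          using K1pos s0 nA0 by (simp add: KE_def powr_mult mult_ac)
        also have "(nA powr (- (eta * (2 - q)) * m1)) powr a = nA powr (- (eta * (2 - q) * m1 * m2 / (q * m1 + m2)))"
          by (simp add: powr_powr a_def)
        finally show ?thesis by (simp add: K_def)
      qed
      finally show ?thesis .
    qed
    have "(\<integral>\<^sup>+\<omega>. ennpow (holder_const (H T \<omega>) Th ths (al T) q eta R0) (m1 * a) *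
                ennreal (Gn \<omega> powr (q * (m1 * a))) \<partial>P) \<le> (\<integral>\<^sup>+\<omega>. ennpow (Fm \<omega>) a * ennpow (g \<omega>) b \<partial>P)"
      using pw by (rule nn_integral_mono_AE)
    also have "\<dots> \<le> ennpow (\<integral>\<^sup>+\<omega>. Fm \<omega> \<partial>P) a * ennpow (\<integral>\<^sup>+\<omega>. g \<omega> \<partial>P) b"
      by (rule holder_nn[OF Fmm gm ab])
    also have "ennpow (\<integral>\<^sup>+\<omega>. Fm \<omega> \<partial>P) a * ennpow (\<integral>\<^sup>+\<omega>. g \<omega> \<partial>P) b \<le>
        ennreal (K * nA powr (- (eta * (2 - q) * m1 * m2 / (q * m1 + m2)))) * ennpow (\<integral>\<^sup>+\<omega>. g \<omega> \<partial>P) b"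
      using FmB by (rule mult_right_mono) simp
    finally show "(let m = m1 * m2 / (q * m1 + m2) in
            (\<integral>\<^sup>+ \<omega>. ennpow (holder_const (H T \<omega>) Th ths (al T) q eta R0) m *
                     ennreal (specnorm (G00 ths (al T) (xi T \<omega>) q) powr (q * m)) \<partial>P))
           \<le> ennreal (K * specnorm (diagm (al T)) powr (- (eta * (2 - q) * m1 * m2 / (q * m1 + m2)))) *
             ennpow (\<integral>\<^sup>+ \<omega>. ennreal (specnorm (G00 ths (al T) (xi T \<omega>) q) powr m2) \<partial>P)
                    (q * m1 / (q * m1 + m2))"
      unfolding Let_def ma by (simp add: Gn_def g_def nA_def b_def)
  qed
qed


end
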